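(* Let $k, p \in \mathbb{R}^{+}$, $m \in \mathbb{N}$ and $a, b \in \mathbb{R}$. Define $$\mathcal{F}(k,m,a,b,p) = \int_0^\infty x^{k-1} Q_m(a\sqrt{x}, b)\, e^{-px}\,{\rm d}x .$$ Then $$\mathcal{F}(k,m,a,b,p) = \frac{\Gamma(k)}{p^k} - \frac{2^k\Gamma(k)\, e^{-\frac{b^2}{2}}}{(a^2+2p)^k}\,\Phi_2\!\left(1,k,1;\frac{b^2}{2},\frac{a^2b^2}{2a^2+4p}\right) + \frac{2^k\Gamma(k)\, e^{-\frac{b^2}{2}}}{(a^2+2p)^k}\sum_{n=0}^{m-1}\frac{b^{2n}}{n!\,2^n}\,{}_1F_1\!\left(k;n+1;\frac{a^2b^2}{2a^2+4p}\right).$$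
   Context: $Q_m(\alpha,\beta)$ is the generalized Marcum $Q$-function, $Q_m(\alpha,\beta) = \alpha^{1-m}\int_\beta^\infty t^{m} e^{-(t^2+\alpha^2)/2} I_{m-1}(\alpha t)\,{\rm d}t$ (with the limiting value for $\alpha=0$), where $I_{\nu}$ is the modified Bessel function of the first kind. $\Gamma$ is the Euler Gamma function, $(x)_n=\Gamma(x+n)/\Gamma(x)$ is the Pochhammer symbol, ${}_1F_1(\alpha;\gamma;z)=\sum_{l\ge 0}\frac{(\alpha)_l}{(\gamma)_l}\frac{z^l}{l!}$ is the Kummer confluent hypergeometric function, and $\Phi_2$ is the Humbert hypergeometric function of the second kind, $\Phi_2(\beta,\beta',\gamma;x,y)=\sum_{n\ge0}\sum_{l\ge0}\frac{(\beta)_n(\beta')_l}{(\gamma)_{n+l}}\frac{x^n}{n!}\frac{y^l}{l!}$. *)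

theory Defs
  imports "HOL-Analysis.Analysis"
begin

definition besselI :: "nat \<Rightarrow> real \<Rightarrow> real" where
  "besselI n z = (\<Sum>l. (z / 2) ^ (2 * l + n) / (fact l * Gamma (real (l + n) + 1)))"

text \<open>Generalized Marcum Q-function for m \<ge> 1:
  Q_m(alpha,beta) = alpha^(1-m) int_beta^infty t^m exp(-(t^2+alpha^2)/2) I_(m-1)(alpha t) dt,
  and for alpha = 0 its limiting value, obtained from
  alpha^(1-m) I_(m-1)(alpha t) \<longrightarrow> t^(m-1) / (2^(m-1) (m-1)!) as alpha \<rightarrow> 0.\<close>
definition marcumQ :: "nat \<Rightarrow> real \<Rightarrow> real \<Rightarrow> real" where
  "marcumQ m \<alpha> \<beta> =
     (if \<alpha> = 0 then
        (LBINT t:{\<beta>..}. t ^ m * exp (- (t\<^sup>2) / 2) * t ^ (m - 1) / (2 ^ (m - 1) * fact (m - 1)))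
      else
        \<alpha> powi (1 - int m) *
        (LBINT t:{\<beta>..}. t ^ m * exp (- (t\<^sup>2 + \<alpha>\<^sup>2) / 2) * besselI (m - 1) (\<alpha> * t)))"

definition hyp1F1 :: "real \<Rightarrow> real \<Rightarrow> real \<Rightarrow> real" where
  "hyp1F1 \<alpha> \<gamma> z = (\<Sum>l. pochhammer \<alpha> l / pochhammer \<gamma> l * z ^ l / fact l)"

definition humbert_Phi2 :: "real \<Rightarrow> real \<Rightarrow> real \<Rightarrow> real \<Rightarrow> real \<Rightarrow> real" where
  "humbert_Phi2 \<beta> \<beta>' \<gamma> x y =
     (\<Sum>n. \<Sum>l. pochhammer \<beta> n * pochhammer \<beta>' l / pochhammer \<gamma> (n + l)
                 * x ^ n / fact n * y ^ l / fact l)"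

definition marcumF :: "real \<Rightarrow> nat \<Rightarrow> real \<Rightarrow> real \<Rightarrow> real \<Rightarrow> real" where
  "marcumF k m a b p = (LBINT x:{0<..}. x powr (k - 1) * marcumQ m (a * sqrt x) b * exp (- p * x))"

end

theory Submission
  imports Defs "HOL-Probability.Probability"
begin

definition hh :: "nat \<Rightarrow> real \<Rightarrow> real" where
  "hh n t = t * (t\<^sup>2/2)^n * exp (-(t\<^sup>2)/2) / fact n"

definition GG :: "nat \<Rightarrow> real \<Rightarrow> real" where
  "GG N s = exp (-s) * (\<Sum>j<N. s^j / fact j)"

lemma GG_deriv:
  "((\<lambda>t. GG (Suc n) (t\<^sup>2/2)) has_real_derivative (- hh n t)) (at t)"
proof (induction n)
  case 0
  show ?case unfolding GG_def hh_def
    by (auto intro!: derivative_eq_intros simp: power2_eq_square)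
next
  case (Suc n)
  have e: "GG (Suc (Suc n)) (t\<^sup>2/2) = GG (Suc n) (t\<^sup>2/2) + exp (-(t\<^sup>2/2)) * ((t\<^sup>2/2)^Suc n / fact (Suc n))" for t
    unfolding GG_def by (simp add: algebra_simps)
  have d: "((\<lambda>t. exp (-(t\<^sup>2/2)) * ((t\<^sup>2/2)^Suc n / fact (Suc n))) has_real_derivative (hh n t - hh (Suc n) t)) (at t)"
    unfolding hh_def
    apply (rule derivative_eq_intros refl | simp only: fact_nonzero not_False_eq_True)+
    apply (simp only: power_Suc fact_Suc of_nat_Suc)
    apply (simp add: divide_simps)
    done
  show ?case unfolding e using DERIV_add[OF Suc d] by simp
qed

lemma hh_std: "hh n t = sqrt (2*pi) / (2^n * fact n) * (std_normal_density t * t^(2*n+1))"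
  unfolding hh_def normal_density_def
  by (simp add: power_mult_distrib power_divide power_mult[symmetric] field_simps)

lemma hh_abs_std: "\<bar>hh n t\<bar> = sqrt (2*pi) / (2^n * fact n) * (std_normal_density t * \<bar>t\<bar>^(2*n+1))"
  unfolding hh_std by (simp add: abs_mult power_abs normal_density_nonneg)

lemma hh_integrable: "integrable lborel (hh n)"
  unfolding hh_std[abs_def] by (intro integrable_mult_right integrable_std_normal_moment)

lemma hh_set_integrable: "set_integrable lborel A (hh n)" if "A \<in> sets lborel"
  unfolding set_integrable_def using that by (intro integrable_mult_indicator hh_integrable)

lemma hh_abs_integral: "integral\<^sup>L lborel (\<lambda>t. \<bar>hh n t\<bar>) = 2"
proof -
  have "integral\<^sup>L lborel (\<lambda>t. \<bar>hh n t\<bar>) = sqrt (2*pi) / (2^n * fact n) * (sqrt (2 / pi) * 2^n * fact n)"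
    unfolding hh_abs_std integral_mult_right_zero integral_std_normal_moment_abs_odd by simp
  also have "\<dots> = sqrt (2*pi) * sqrt (2/pi)" by simp
  also have "\<dots> = 2" by (simp add: real_sqrt_mult[symmetric])
  finally show ?thesis .
qed

lemma hh_abs_set_integral: "(LBINT t:A. \<bar>hh n t\<bar>) \<le> 2" if "A \<in> sets lborel"
proof -
  have "(LBINT t:A. \<bar>hh n t\<bar>) \<le> integral\<^sup>L lborel (\<lambda>t. \<bar>hh n t\<bar>)"
    unfolding set_lebesgue_integral_def
    using that
    by (intro integral_mono integrable_mult_indicator integrable_abs hh_integrable)
       (auto split: split_indicator)
  then show ?thesis using hh_abs_integral by simp
qed

lemma GG_lim: "((\<lambda>t. GG (Suc n) (t\<^sup>2/2)) \<longlongrightarrow> 0) at_top"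
proof -
  have u: "filterlim (\<lambda>t::real. t\<^sup>2/2) at_top at_top" by real_asymp
  have e: "((\<lambda>t::real. (t\<^sup>2/2)^j / exp (t\<^sup>2/2)) \<longlongrightarrow> 0) at_top" for j
    using filterlim_compose[OF tendsto_power_div_exp_0 u] by (simp add: o_def)
  have "((\<lambda>t::real. (\<Sum>j<Suc n. ((t\<^sup>2/2)^j / exp (t\<^sup>2/2)) / fact j)) \<longlongrightarrow> (\<Sum>j<Suc n. 0 / fact j)) at_top"
    by (intro tendsto_sum tendsto_divide e tendsto_const) auto
  moreover have "GG (Suc n) (t\<^sup>2/2) = (\<Sum>j<Suc n. ((t\<^sup>2/2)^j / exp (t\<^sup>2/2)) / fact j)" for t
    unfolding GG_def by (simp add: sum_distrib_left exp_minus field_simps)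
  ultimately show ?thesis by simp
qed

lemma hh_set_integral: "(LBINT t:{\<beta>..}. hh n t) = GG (Suc n) (\<beta>\<^sup>2/2)"
proof -
  have "(LBINT t=ereal \<beta>..\<infinity>. hh n t) = 0 - (- GG (Suc n) (\<beta>\<^sup>2/2))"
  proof (rule interval_integral_FTC_integrable[where F="\<lambda>t. - GG (Suc n) (t\<^sup>2/2)"])
    show "ereal \<beta> < \<infinity>" by simp
    show "((\<lambda>t. - GG (Suc n) (t\<^sup>2/2)) has_vector_derivative hh n x) (at x)" for x
      using DERIV_minus[OF GG_deriv[of n x]] by (simp add: has_real_derivative_iff_has_vector_derivative)
    show "isCont (hh n) x" for x unfolding hh_def[abs_def] by (intro continuous_intros) auto
    show "set_integrable lborel (einterval (ereal \<beta>) \<infinity>) (hh n)"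
      by (intro hh_set_integrable) simp
    have c: "isCont (\<lambda>t. - GG (Suc n) (t\<^sup>2/2)) \<beta>"
      using DERIV_isCont[OF DERIV_minus[OF GG_deriv[of n \<beta>]]] .
    show "(((\<lambda>t. - GG (Suc n) (t\<^sup>2/2)) \<circ> real_of_ereal) \<longlongrightarrow> - GG (Suc n) (\<beta>\<^sup>2/2)) (at_right (ereal \<beta>))"
      unfolding ereal_tendsto_simps1
      using c unfolding isCont_def by (rule tendsto_mono[OF at_le, rotated]) simp
    show "(((\<lambda>t. - GG (Suc n) (t\<^sup>2/2)) \<circ> real_of_ereal) \<longlongrightarrow> 0) (at_left \<infinity>)"
      unfolding ereal_tendsto_simps1 using tendsto_minus[OF GG_lim[of n]] by simp
  qed
  also have "(LBINT t=ereal \<beta>..\<infinity>. hh n t) = (LBINT t:{\<beta><..}. hh n t)"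
    by (simp add: interval_integral_Ioi)
  also have "\<dots> = (LBINT t:{\<beta>..}. hh n t)"
    by (rule set_integral_discrete_difference[where X="{\<beta>}"]) auto
  finally show ?thesis by simp
qed


lemma exp_sums_real: "(\<lambda>n. x^n / fact n) sums exp (x::real)"
  using exp_converges[of x] by (simp add: divide_inverse mult.commute)

lemma pow_fact_le_exp: "0 \<le> x \<Longrightarrow> x^n / fact n \<le> exp (x::real)"
  using sum_le_suminf[of "\<lambda>n. x^n / fact n" "{n}"] exp_sums_real[of x]
  by (auto simp: sums_iff)

lemma hh_abs_le: "\<bar>hh n t\<bar> \<le> \<bar>t\<bar>"
proof -
  have "\<bar>hh n t\<bar> = \<bar>t\<bar> * (((t\<^sup>2/2)^n / fact n) * exp (-(t\<^sup>2)/2))"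
    unfolding hh_def by (simp add: abs_mult)
  also have "\<dots> \<le> \<bar>t\<bar> * (exp (t\<^sup>2/2) * exp (-(t\<^sup>2)/2))"
    by (intro mult_left_mono mult_right_mono pow_fact_le_exp) auto
  also have "\<dots> = \<bar>t\<bar>" by (simp add: exp_minus[symmetric] exp_add[symmetric])
  finally show ?thesis .
qed

lemma set_integral_suminf_real:
  fixes g :: "nat \<Rightarrow> real \<Rightarrow> real"
  assumes A: "A \<in> sets lborel"
    and int: "\<And>l. set_integrable lborel A (g l)"
    and sm: "\<And>t. t \<in> A \<Longrightarrow> summable (\<lambda>l. \<bar>g l t\<bar>)"
    and si: "summable (\<lambda>l. LBINT t:A. \<bar>g l t\<bar>)"
  shows "(LBINT t:A. (\<Sum>l. g l t)) = (\<Sum>l. LBINT t:A. g l t)"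
proof -
  have eq: "indicator A t *\<^sub>R (\<Sum>l. g l t) = (\<Sum>l. indicator A t *\<^sub>R g l t)" for t
  proof (cases "t \<in> A")
    case True
    then show ?thesis using suminf_mult[OF summable_rabs_cancel[OF sm[OF True]], of 1] by simp
  qed simp
  have "(\<integral>t. (\<Sum>l. indicator A t *\<^sub>R g l t) \<partial>lborel) = (\<Sum>l. \<integral>t. indicator A t *\<^sub>R g l t \<partial>lborel)"
  proof (rule integral_suminf)
    show "integrable lborel (\<lambda>t. indicator A t *\<^sub>R g l t)" for l
      using int[of l] unfolding set_integrable_def .
    show "AE x in lborel. summable (\<lambda>i. norm (indicator A x *\<^sub>R g i x))"
      using sm by (auto simp: indicator_def)
    have "(\<integral>x. norm (indicator A x *\<^sub>R g i x) \<partial>lborel) = (LBINT t:A. \<bar>g i t\<bar>)" for i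
      unfolding set_lebesgue_integral_def
      by (rule arg_cong[where f="integral\<^sup>L lborel"]) (auto simp: fun_eq_iff indicator_def)
    then show "summable (\<lambda>i. \<integral>x. norm (indicator A x *\<^sub>R g i x) \<partial>lborel)"
      using si by simp
  qed
  then show ?thesis unfolding set_lebesgue_integral_def eq .
qed


definition ww :: "real \<Rightarrow> nat \<Rightarrow> real" where
  "ww \<alpha> l = (\<alpha>\<^sup>2/2)^l / fact l * exp (-(\<alpha>\<^sup>2)/2)"

lemma ww_nonneg: "ww \<alpha> l \<ge> 0" unfolding ww_def by simp

lemma ww_sums: "ww \<alpha> sums 1"
proof -
  have "(\<lambda>l. (\<alpha>\<^sup>2/2)^l / fact l * exp (-(\<alpha>\<^sup>2)/2)) sums (exp (\<alpha>\<^sup>2/2) * exp (-(\<alpha>\<^sup>2)/2))"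
    by (rule sums_mult2[OF exp_sums_real])
  then show ?thesis unfolding ww_def by (simp add: exp_add[symmetric])
qed

lemma bessel_term_eq:
  assumes "\<alpha> \<noteq> 0"
  shows "inverse (\<alpha>^m') * (t^Suc m' * exp (-(t\<^sup>2+\<alpha>\<^sup>2)/2) * ((\<alpha>*t/2)^(2*l+m') / (fact l * fact (l+m'))))
     = ww \<alpha> l * hh (l+m') t"
proof -
  have e: "exp (-(t\<^sup>2+\<alpha>\<^sup>2)/2) = exp (-(t\<^sup>2)/2) * exp (-(\<alpha>\<^sup>2)/2)"
    by (simp add: exp_add[symmetric] field_simps)
  have p: "(\<alpha>*t/2)^(2*l+m') = (\<alpha>\<^sup>2)^l * \<alpha>^m' * t^(2*l+m') / 2^(2*l+m')"
    by (simp add: power_mult_distrib power_divide power_add power_mult)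
  show ?thesis unfolding ww_def hh_def e p using assms
    apply (simp add: field_simps power_mult_distrib power_divide power_add power_mult)
    apply (simp add: power2_eq_square power_mult_distrib mult_ac)
    done
qed


lemma bessel_summable:
  "summable (\<lambda>l. (z/2)^(2*l+n) / (fact l * Gamma (real (l+n) + 1)))"
proof (rule summable_comparison_test)
  show "summable (\<lambda>l. \<bar>z/2\<bar>^n * (((z/2)\<^sup>2)^l / fact l))"
    by (intro summable_mult sums_summable[OF exp_sums_real])
  show "\<exists>N. \<forall>l\<ge>N. norm ((z/2)^(2*l+n) / (fact l * Gamma (real (l+n) + 1))) \<le> \<bar>z/2\<bar>^n * (((z/2)\<^sup>2)^l / fact l)"
  proof (intro exI allI impI)
    fix l :: nat
    have g: "Gamma (real (l+n) + 1) = fact (l+n)"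
      using Gamma_fact[of "l+n", where 'a=real] by (simp add: add.commute)
    have "norm ((z/2)^(2*l+n) / (fact l * Gamma (real (l+n) + 1)))
        = \<bar>z/2\<bar>^n * (((z/2)\<^sup>2)^l / fact l) / fact (l+n)"
    proof -
      have a: "\<bar>(z/2)^(2*l+n)\<bar> = \<bar>z/2\<bar>^n * ((z/2)\<^sup>2)^l"
      proof -
        have a0: "(z/2)^(2*l+n) = ((z/2)\<^sup>2)^l * (z/2)^n" by (simp add: power_add power_mult)
        show ?thesis unfolding a0 abs_mult abs_of_nonneg[OF zero_le_power[OF zero_le_power2]]
          by (simp only: power_abs mult.commute)
      qed
      show ?thesis unfolding g real_norm_def abs_divide a by (simp add: field_simps)
    qed
    also have "\<dots> \<le> \<bar>z/2\<bar>^n * (((z/2)\<^sup>2)^l / fact l)"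
      using divide_left_mono[of 1 "fact (l+n)" "\<bar>z/2\<bar>^n * (((z/2)\<^sup>2)^l / fact l)"] fact_ge_1[of "l+n", where 'a=real]
      by simp
    finally show "norm ((z/2)^(2*l+n) / (fact l * Gamma (real (l+n) + 1))) \<le> \<bar>z/2\<bar>^n * (((z/2)\<^sup>2)^l / fact l)" .
  qed
qed

lemma marcumQ_series:
  "marcumQ (Suc m') \<alpha> \<beta> = (\<Sum>l. ww \<alpha> l * GG (Suc (l+m')) (\<beta>\<^sup>2/2))"
proof (cases "\<alpha> = 0")
  case True
  have f: "(\<lambda>t. t ^ Suc m' * exp (- (t\<^sup>2) / 2) * t ^ (Suc m' - 1) / (2 ^ (Suc m' - 1) * fact (Suc m' - 1))) = hh m'"
    by (rule ext) (simp add: hh_def power_divide power_mult[symmetric] power_add[symmetric] field_simps mult_2_right)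
  have l: "marcumQ (Suc m') \<alpha> \<beta> = GG (Suc m') (\<beta>\<^sup>2/2)"
    using True unfolding marcumQ_def f by (simp add: hh_set_integral)
  have "(\<lambda>l. ww \<alpha> l * GG (Suc (l+m')) (\<beta>\<^sup>2/2)) = (\<lambda>l. if l = 0 then GG (Suc m') (\<beta>\<^sup>2/2) else 0)"
    using True by (auto simp: ww_def fun_eq_iff)
  then show ?thesis using l sums_single[of 0 "\<lambda>_. GG (Suc m') (\<beta>\<^sup>2/2)"]
    by (simp add: sums_iff)
next
  case False
  let ?g = "\<lambda>l t. ww \<alpha> l * hh (l+m') t"
  have pw: "\<alpha> powi (1 - int (Suc m')) * (t ^ Suc m' * exp (- (t\<^sup>2 + \<alpha>\<^sup>2) / 2) * besselI (Suc m' - 1) (\<alpha> * t))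
      = (\<Sum>l. ?g l t)" for t
  proof -
    have pi: "\<alpha> powi (1 - int (Suc m')) = inverse (\<alpha>^m')"
      by (simp add: power_int_minus)
    have g: "Gamma (real (l+m') + 1) = fact (l+m')" for l
      using Gamma_fact[of "l+m'", where 'a=real] by (simp add: add.commute)
    have "\<alpha> powi (1 - int (Suc m')) * (t ^ Suc m' * exp (- (t\<^sup>2 + \<alpha>\<^sup>2) / 2) * besselI (Suc m' - 1) (\<alpha> * t))
       = (\<Sum>l. inverse (\<alpha>^m') * (t ^ Suc m' * exp (- (t\<^sup>2 + \<alpha>\<^sup>2) / 2) *
             ((\<alpha> * t / 2)^(2*l+m') / (fact l * Gamma (real (l+m') + 1)))))"
      unfolding pi besselI_def
      using suminf_mult[OF bessel_summable[of "\<alpha>*t" m'], of "t ^ Suc m' * exp (- (t\<^sup>2 + \<alpha>\<^sup>2) / 2)"]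
            suminf_mult[OF summable_mult[OF bessel_summable[of "\<alpha>*t" m']], of "inverse (\<alpha>^m')" "t ^ Suc m' * exp (- (t\<^sup>2 + \<alpha>\<^sup>2) / 2)"]
      by (simp add: mult.assoc)
    also have "\<dots> = (\<Sum>l. ?g l t)"
      unfolding g using bessel_term_eq[OF False] by simp
    finally show ?thesis .
  qed
  have "marcumQ (Suc m') \<alpha> \<beta> = (LBINT t:{\<beta>..}. (\<Sum>l. ?g l t))"
    using False unfolding marcumQ_def pw[symmetric] by simp
  also have "\<dots> = (\<Sum>l. LBINT t:{\<beta>..}. ?g l t)"
  proof (rule set_integral_suminf_real)
    show "set_integrable lborel {\<beta>..} (?g l)" for l
      unfolding set_integrable_def
      by (intro integrable_mult_indicator integrable_mult_right hh_integrable) auto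
    show "summable (\<lambda>l. \<bar>?g l t\<bar>)" for t
    proof (rule summable_comparison_test)
      show "summable (\<lambda>l. ww \<alpha> l * \<bar>t\<bar>)"
        by (intro summable_mult2 sums_summable[OF ww_sums])
      show "\<exists>N. \<forall>l\<ge>N. norm \<bar>?g l t\<bar> \<le> ww \<alpha> l * \<bar>t\<bar>"
        using hh_abs_le ww_nonneg by (auto simp: abs_mult intro!: mult_left_mono)
    qed
    show "summable (\<lambda>l. LBINT t:{\<beta>..}. \<bar>?g l t\<bar>)"
    proof (rule summable_comparison_test)
      show "summable (\<lambda>l. ww \<alpha> l * 2)"
        by (intro summable_mult2 sums_summable[OF ww_sums])
      have "(LBINT t:{\<beta>..}. \<bar>?g l t\<bar>) = ww \<alpha> l * (LBINT t:{\<beta>..}. \<bar>hh (l+m') t\<bar>)" for l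
        using ww_nonneg[of \<alpha> l] by (simp add: abs_mult)
      moreover have "(LBINT t:{\<beta>..}. \<bar>hh (l+m') t\<bar>) \<ge> 0" for l
        unfolding set_lebesgue_integral_def by (intro integral_nonneg_AE AE_I2) (auto simp: indicator_def)
      ultimately show "\<exists>N. \<forall>l\<ge>N. norm (LBINT t:{\<beta>..}. \<bar>?g l t\<bar>) \<le> ww \<alpha> l * 2"
        using hh_abs_set_integral ww_nonneg by (auto intro!: mult_left_mono)
    qed
  qed simp
  also have "\<dots> = (\<Sum>l. ww \<alpha> l * GG (Suc (l+m')) (\<beta>\<^sup>2/2))"
    by (simp add: hh_set_integral)
  finally show ?thesis .
qed


lemma gamma_hbi:
  fixes c q :: real
  assumes c: "c > 0" and q: "q > 0"
  shows "has_bochner_integral lborel (\<lambda>x. indicator {0<..} x *\<^sub>R (x powr (q-1) * exp (-c*x))) (Gamma q / c powr q)"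
proof -
  define f where "f = (\<lambda>t::real. indicator {0..} t * t powr (q-1) / exp t)"
  have h1: "has_bochner_integral lborel f (Gamma q)"
    unfolding f_def
  proof (rule has_bochner_integral_nn_integral)
    show "(\<lambda>t::real. indicator {0..} t * t powr (q-1) / exp t) \<in> borel_measurable lborel"
      by measurable
    show "AE x in lborel. 0 \<le> indicator {0..} x * x powr (q-1) / exp x"
      by (auto simp: indicator_def)
    show "0 \<le> Gamma q" using q by (simp add: Gamma_real_pos less_imp_le)
    show "(\<integral>\<^sup>+ x. ennreal (indicator {0..} x * x powr (q-1) / exp x) \<partial>lborel) = ennreal (Gamma q)"
      using Gamma_conv_nn_integral_real[OF q] by simp
  qed
  have h2: "has_bochner_integral lborel (\<lambda>x. f (0 + c*x)) (Gamma q /\<^sub>R \<bar>c\<bar>)"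
    using h1 lborel_has_bochner_integral_real_affine_iff[of c f "Gamma q" 0] c by simp
  have eq: "f (0 + c*x) = c powr (q-1) * (indicator {0<..} x *\<^sub>R (x powr (q-1) * exp (-c*x)))" for x
  proof (cases "x > 0")
    case True
    then show ?thesis using c unfolding f_def
      by (simp add: powr_mult exp_minus field_simps)
  next
    case False
    then show ?thesis using c unfolding f_def
      by (cases "x = 0") (auto simp: indicator_def not_le mult_less_0_iff zero_le_mult_iff)
  qed
  have h3: "has_bochner_integral lborel (\<lambda>x. c powr (q-1) * (indicator {0<..} x *\<^sub>R (x powr (q-1) * exp (-c*x)))) (Gamma q / c)"
    using h2 c unfolding eq by (simp add: divide_inverse mult.commute)
  note h4 = has_bochner_integral_mult_right[of "inverse (c powr (q-1))", OF h3]
  have e1: "inverse (c powr (q-1)) * (Gamma q / c) = Gamma q / c powr q"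
    using c by (simp add: powr_diff field_simps)
  have e2: "inverse (c powr (q-1)) * (c powr (q-1) * y) = y" for y
    using c by simp
  show ?thesis using h4 unfolding e1 e2 .
qed


lemma GG_nonneg: "s \<ge> 0 \<Longrightarrow> GG N s \<ge> 0"
  unfolding GG_def by (intro mult_nonneg_nonneg sum_nonneg) auto

lemma GG_le_1: "s \<ge> 0 \<Longrightarrow> GG N s \<le> 1"
proof -
  assume s: "s \<ge> 0"
  have "(\<Sum>j<N. s^j / fact j) \<le> exp s"
    using sum_le_suminf[of "\<lambda>j. s^j / fact j" "{..<N}"] exp_sums_real[of s] s
    by (auto simp: sums_iff)
  then have "GG N s \<le> exp (-s) * exp s"
    unfolding GG_def by (intro mult_left_mono) auto
  then show ?thesis by (simp add: exp_minus)
qed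

lemma binom_sums:
  fixes r k :: real
  assumes "0 \<le> r" "r < 1"
  shows "(\<lambda>l. pochhammer k l * r^l / fact l) sums (1 - r) powr (-k)"
proof -
  have "(\<lambda>n. ((-k) gchoose n) * (-r)^n) sums (1 + -r) powr (-k)"
    by (rule gen_binomial_real) (use assms in auto)
  moreover have "((-k) gchoose n) * (-r)^n = pochhammer k n * r^n / fact n" for n
  proof -
    have m: "(-1::real)^n * (-1)^n = 1" by (simp add: power_mult_distrib[symmetric])
    have "((-k) gchoose n) * (-r)^n = ((-1)^n * (-1)^n) * (pochhammer k n * r^n / fact n)"
      unfolding gbinomial_pochhammer power_minus[of r n] by (simp only: minus_minus mult_ac times_divide_eq_left times_divide_eq_right)
    then show ?thesis unfolding m by simp
  qed
  ultimately show ?thesis by simp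
qed


lemma set_integrable_gamma:
  fixes c q :: real
  assumes "c > 0" "q > 0"
  shows "set_integrable lborel {0<..} (\<lambda>x. x powr (q-1) * exp (-c*x))"
    and "(LBINT x:{0<..}. x powr (q-1) * exp (-c*x)) = Gamma q / c powr q"
  using integrable.intros[OF gamma_hbi[OF assms]] has_bochner_integral_integral_eq[OF gamma_hbi[OF assms]]
  unfolding set_integrable_def set_lebesgue_integral_def by auto

lemma Gamma_add_poch: "k > 0 \<Longrightarrow> Gamma (k + real l) = pochhammer k l * Gamma (k::real)"
proof -
  assume k: "k > 0"
  have "k \<notin> \<int>\<^sub>\<le>\<^sub>0" using nonpos_Ints_nonpos[of k] k by force
  then have "pochhammer k l = Gamma (k + real l) / Gamma k" by (rule pochhammer_Gamma)
  then show ?thesis using Gamma_real_pos[OF k] by simp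
qed

lemma marcumF_series:
  fixes k p a b :: real
  assumes k: "k > 0" and p: "p > 0"
  defines "c \<equiv> p + a\<^sup>2/2" and "r \<equiv> (a\<^sup>2/2)/(p + a\<^sup>2/2)" and "s \<equiv> b\<^sup>2/2"
  shows "marcumF k (Suc m') a b p = Gamma k / c powr k * (\<Sum>l. pochhammer k l * r^l / fact l * GG (Suc (l+m')) s)"
proof -
  have c: "c > 0" unfolding c_def using p by (simp add: add_pos_nonneg)
  have s0: "s \<ge> 0" unfolding s_def by simp
  have r0: "r \<ge> 0" "r < 1" unfolding r_def using p by (auto simp: add_pos_nonneg)
  define A where "A l = pochhammer k l * r^l / fact l" for l
  have A0: "A l \<ge> 0" for l unfolding A_def using k r0 by (simp add: pochhammer_nonneg)
  have Asum: "summable A" unfolding A_def using binom_sums[OF r0] by (rule sums_summable)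
  define g where "g l x = (a\<^sup>2/2)^l / fact l * GG (Suc (l+m')) s * (x powr (k + real l - 1) * exp (-c*x))" for l x
  have g0: "g l x \<ge> 0" for l x unfolding g_def using GG_nonneg[OF s0] by simp
  have ptw: "x powr (k-1) * marcumQ (Suc m') (a * sqrt x) b * exp (-p*x) = (\<Sum>l. g l x)" if x: "x > 0" for x
  proof -
    have sq: "(a * sqrt x)\<^sup>2 = a\<^sup>2 * x" using x by (simp add: power_mult_distrib)
    have sm: "summable (\<lambda>l. ww (a * sqrt x) l * GG (Suc (l+m')) s)"
    proof (rule summable_comparison_test)
      show "summable (ww (a * sqrt x))" using ww_sums by (rule sums_summable)
      show "\<exists>N. \<forall>n\<ge>N. norm (ww (a * sqrt x) n * GG (Suc (n + m')) s) \<le> ww (a * sqrt x) n"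
        using GG_nonneg[OF s0] GG_le_1[OF s0] ww_nonneg
        by (auto simp: abs_mult intro!: mult_left_le)
    qed
    have "x powr (k-1) * marcumQ (Suc m') (a * sqrt x) b * exp (-p*x)
        = (\<Sum>l. x powr (k-1) * (ww (a * sqrt x) l * GG (Suc (l+m')) s) * exp (-p*x))"
    proof -
      have "x powr (k-1) * marcumQ (Suc m') (a * sqrt x) b * exp (-p*x) = 
         (x powr (k-1) * (\<Sum>l. ww (a * sqrt x) l * GG (Suc (l+m')) s)) * exp (-p*x)"
        unfolding marcumQ_series s_def by simp
      also have "\<dots> = (\<Sum>l. x powr (k-1) * (ww (a * sqrt x) l * GG (Suc (l+m')) s)) * exp (-p*x)"
        using suminf_mult[OF sm, of "x powr (k-1)"] by simp
      also have "\<dots> = (\<Sum>l. x powr (k-1) * (ww (a * sqrt x) l * GG (Suc (l+m')) s) * exp (-p*x))"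
        by (rule suminf_mult2[OF summable_mult[OF sm]])
      finally show ?thesis .
    qed
    also have "\<dots> = (\<Sum>l. g l x)"
    proof (rule arg_cong[where f=suminf], rule ext)
      fix l
      have e: "exp (-(a\<^sup>2*x)/2) * exp (-p*x) = exp (-c*x)"
        unfolding c_def by (simp add: exp_add[symmetric] field_simps)
      have pw: "x powr (k-1) * x^l = x powr (k + real l - 1)"
        using x by (simp add: powr_realpow[symmetric] powr_add[symmetric] algebra_simps)
      show "x powr (k-1) * (ww (a * sqrt x) l * GG (Suc (l+m')) s) * exp (-p*x) = g l x"
        unfolding g_def ww_def sq pw[symmetric] e[symmetric]
        by (simp add: power_mult_distrib power_divide field_simps)
    qed
    finally show ?thesis .
  qed
  have intg: "(LBINT x:{0<..}. g l x) = (a\<^sup>2/2)^l / fact l * GG (Suc (l+m')) s * (Gamma (k + real l) / c powr (k + real l))" for l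
    unfolding g_def using set_integrable_gamma(2)[OF c, of "k + real l"] k by simp
  have intg2: "(LBINT x:{0<..}. g l x) = Gamma k / c powr k * (A l * GG (Suc (l+m')) s)" for l
  proof -
    have "c powr (k + real l) = c powr k * c^l" using c by (simp add: powr_add powr_realpow)
    moreover have "r^l = (a\<^sup>2/2)^l / c^l" unfolding r_def c_def by (rule power_divide)
    ultimately show ?thesis unfolding intg A_def Gamma_add_poch[OF k] using c by (simp add: field_simps)
  qed
  have "marcumF k (Suc m') a b p = (LBINT x:{0<..}. (\<Sum>l. g l x))"
    unfolding marcumF_def by (rule set_lebesgue_integral_cong) (auto simp: ptw[simplified])
  also have "\<dots> = (\<Sum>l. LBINT x:{0<..}. g l x)"
  proof (rule set_integral_suminf_real)
    show "set_integrable lborel {0<..} (g l)" for l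
      unfolding g_def using set_integrable_gamma(1)[OF c, of "k + real l"] k
      by (intro set_integrable_mult_right) auto
    show "summable (\<lambda>l. \<bar>g l x\<bar>)" if "x \<in> {0<..}" for x
    proof -
      have x: "x > 0" using that by simp
      have sm: "summable (\<lambda>l. x powr (k-1) * (ww (a * sqrt x) l * GG (Suc (l+m')) s) * exp (-p*x))"
      proof (rule summable_comparison_test)
        show "summable (\<lambda>l. x powr (k-1) * ww (a * sqrt x) l * exp (-p*x))"
          by (intro summable_mult2 summable_mult sums_summable[OF ww_sums])
        show "\<exists>N. \<forall>n\<ge>N. norm (x powr (k-1) * (ww (a * sqrt x) n * GG (Suc (n + m')) s) * exp (-p*x)) \<le> x powr (k-1) * ww (a * sqrt x) n * exp (-p*x)"
          using GG_nonneg[OF s0] GG_le_1[OF s0] ww_nonneg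
          by (auto simp: abs_mult intro!: mult_left_le mult_right_mono mult_left_mono)
      qed
      have "(\<lambda>l. x powr (k-1) * (ww (a * sqrt x) l * GG (Suc (l+m')) s) * exp (-p*x)) = (\<lambda>l. \<bar>g l x\<bar>)"
      proof (rule ext)
        fix l
        have e: "exp (-(a\<^sup>2*x)/2) * exp (-p*x) = exp (-c*x)"
          unfolding c_def by (simp add: exp_add[symmetric] field_simps)
        have pw: "x powr (k-1) * x^l = x powr (k + real l - 1)"
          using x by (simp add: powr_realpow[symmetric] powr_add[symmetric] algebra_simps)
        have sq: "(a * sqrt x)\<^sup>2 = a\<^sup>2 * x" using x by (simp add: power_mult_distrib)
        show "x powr (k-1) * (ww (a * sqrt x) l * GG (Suc (l+m')) s) * exp (-p*x) = \<bar>g l x\<bar>"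
          apply (subst abs_of_nonneg[OF g0])
          unfolding g_def ww_def sq pw[symmetric] e[symmetric]
          by (simp add: power_mult_distrib power_divide field_simps)
      qed
      then show ?thesis using sm by simp
    qed
    show "summable (\<lambda>l. LBINT x:{0<..}. \<bar>g l x\<bar>)"
    proof (rule summable_comparison_test)
      show "summable (\<lambda>l. Gamma k / c powr k * A l)" by (intro summable_mult Asum)
      have eqn: "(LBINT x:{0<..}. \<bar>g l x\<bar>) = Gamma k / c powr k * (A l * GG (Suc (l+m')) s)" for l
        using intg2[of l] g0 by simp
      have G0: "Gamma k / c powr k \<ge> 0" using k c by (simp add: Gamma_real_pos less_imp_le)
      have le: "A n * GG (Suc (n+m')) s \<le> A n" for n
        using GG_nonneg[OF s0] GG_le_1[OF s0] A0 by (intro mult_left_le) auto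
      have ge: "A n * GG (Suc (n+m')) s \<ge> 0" for n
        using GG_nonneg[OF s0] A0 by simp
      have "norm (LBINT x:{0<..}. \<bar>g n x\<bar>) \<le> Gamma k / c powr k * A n" for n
        unfolding eqn real_norm_def abs_of_nonneg[OF mult_nonneg_nonneg[OF G0 ge]]
        by (rule mult_left_mono[OF le G0])
      then show "\<exists>N. \<forall>n\<ge>N. norm (LBINT x:{0<..}. \<bar>g n x\<bar>) \<le> Gamma k / c powr k * A n"
        by blast
    qed
  qed simp
  also have "\<dots> = Gamma k / c powr k * (\<Sum>l. A l * GG (Suc (l+m')) s)"
    unfolding intg2
  proof (rule suminf_mult)
    show "summable (\<lambda>l. A l * GG (Suc (l+m')) s)"
    proof (rule summable_comparison_test)
      show "summable A" by (rule Asum)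
      show "\<exists>N. \<forall>n\<ge>N. norm (A n * GG (Suc (n + m')) s) \<le> A n"
        using GG_nonneg[OF s0] GG_le_1[OF s0] A0 by (auto simp: abs_mult intro!: mult_left_le)
    qed
  qed
  finally show ?thesis unfolding A_def .
qed


lemma suminf_swap_nonneg:
  fixes f :: "nat \<Rightarrow> nat \<Rightarrow> real"
  assumes nn: "\<And>n l. 0 \<le> f n l"
    and inner: "\<And>l. summable (\<lambda>n. f n l)"
    and outer: "summable (\<lambda>l. \<Sum>n. f n l)"
  shows "(\<Sum>n. \<Sum>l. f n l) = (\<Sum>l. \<Sum>n. f n l)"
proof -
  have hs: "((\<lambda>n. f n l) has_sum (\<Sum>n. f n l)) UNIV" for l
    using inner[of l] by (intro sums_nonneg_imp_has_sum) (auto simp: nn)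
  have gs: "(\<lambda>l. \<Sum>n. f n l) summable_on UNIV"
    using outer by (rule summable_nonneg_imp_summable_on) (intro suminf_nonneg inner nn)
  have S: "(\<lambda>(l,n). f n l) summable_on (UNIV \<times> UNIV)"
    using summable_on_SigmaI[where f="\<lambda>(l,n). f n l" and A=UNIV and B="\<lambda>_. UNIV" and g="\<lambda>l. \<Sum>n. f n l"] hs gs nn
    by auto
  have S': "(\<lambda>(n,l). f n l) summable_on (UNIV \<times> UNIV)"
    using S unfolding summable_on_swap[of "\<lambda>(l,n). f n l"] by simp
  have sec: "(\<lambda>l. f n l) summable_on UNIV" for n
    using summable_on_SigmaD1[OF S', of n] by simp
  have hs2: "((\<lambda>l. f n l) has_sum (\<Sum>l. f n l)) UNIV" for n
  proof -
    have "((\<lambda>l. f n l) has_sum (infsum (\<lambda>l. f n l) UNIV)) UNIV" using sec[of n] by simp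
    moreover then have "(\<lambda>l. f n l) sums (infsum (\<lambda>l. f n l) UNIV)" by (rule has_sum_imp_sums)
    ultimately show ?thesis by (simp add: sums_iff)
  qed
  have o2: "(\<lambda>n. \<Sum>l. f n l) summable_on UNIV"
    using summable_on_SigmaD[of "\<lambda>(n,l). f n l" UNIV "\<lambda>_. UNIV"] S' sec
    by (simp add: infsumI[OF hs2])
  have "infsum (\<lambda>l. infsum (\<lambda>n. f n l) UNIV) UNIV = infsum (\<lambda>n. infsum (\<lambda>l. f n l) UNIV) UNIV"
    using infsum_swap_banach[of "\<lambda>l n. f n l" UNIV UNIV] S by simp
  then have e: "infsum (\<lambda>l. \<Sum>n. f n l) UNIV = infsum (\<lambda>n. \<Sum>l. f n l) UNIV"
    by (simp add: infsumI[OF hs] infsumI[OF hs2])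
  have "(\<lambda>l. \<Sum>n. f n l) sums infsum (\<lambda>l. \<Sum>n. f n l) UNIV"
    using gs by (intro has_sum_imp_sums) simp
  moreover have "(\<lambda>n. \<Sum>l. f n l) sums infsum (\<lambda>n. \<Sum>l. f n l) UNIV"
    using o2 by (intro has_sum_imp_sums) simp
  ultimately show ?thesis using e by (simp add: sums_iff)
qed


lemma poch_shift: "pochhammer (real n + 1) l * fact n = (fact (n+l) :: real)"
proof (induction l)
  case (Suc l)
  have "pochhammer (real n + 1) (Suc l) * fact n = (pochhammer (real n + 1) l * fact n) * (real n + 1 + real l)"
    by (simp add: pochhammer_Suc mult_ac)
  also have "\<dots> = fact (n + Suc l)" unfolding Suc by (simp add: algebra_simps)
  finally show ?case .
qed simp

lemma fact_mult_le: "fact n * fact l \<le> (fact (n+l) :: real)"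
proof -
  have "fact n * fact l \<le> (fact (n+l) :: nat)"
    by (rule dvd_imp_le[OF fact_fact_dvd_fact]) simp
  then have "real (fact n * fact l) \<le> real (fact (n+l))" by (simp only: of_nat_le_iff)
  then show ?thesis by simp
qed

lemma S_le_exp: "0 \<le> s \<Longrightarrow> (\<Sum>j<N. s^j / fact j) \<le> exp (s::real)"
  using sum_le_suminf[of "\<lambda>j. s^j / fact j" "{..<N}"] exp_sums_real[of s]
  by (auto simp: sums_iff)

lemma final_series:
  fixes k r s :: real and M :: nat
  assumes k: "k > 0" and r: "0 \<le> r" "r < 1" and s: "s \<ge> 0"
  shows "(\<lambda>l. pochhammer k l * r^l / fact l * GG (l+M) s) sums
     ((1-r) powr (-k) - exp (-s) * humbert_Phi2 1 k 1 s (s*r)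
      + exp (-s) * (\<Sum>n<M. s^n / fact n * hyp1F1 k (real n + 1) (s*r)))"
proof -
  define A where "A l = pochhammer k l * r^l / fact l" for l
  define E where "E j = s^j / fact j" for j
  define S where "S l = (\<Sum>j<l. E j)" for l
  define T where "T n l = A l * E (n+l)" for n l
  have A0: "A l \<ge> 0" for l unfolding A_def using k r by (simp add: pochhammer_nonneg)
  have SA: "A sums (1-r) powr (-k)" unfolding A_def by (rule binom_sums[OF r])
  have Asm: "summable A" using SA by (rule sums_summable)
  have E0: "E j \<ge> 0" for j unfolding E_def using s by simp
  have Eexp: "E sums exp s" unfolding E_def by (rule exp_sums_real)
  have S0: "S l \<ge> 0" for l unfolding S_def using E0 by (simp add: sum_nonneg)
  have Sle: "S l \<le> exp s" for l unfolding S_def E_def using S_le_exp[OF s] .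
  have T0: "T n l \<ge> 0" for n l unfolding T_def using A0 E0 by simp
  have shift: "(\<lambda>n. E (n+l)) sums (exp s - S l)" for l
    unfolding S_def using sums_split_initial_segment[OF Eexp] .
  have Tl: "(\<lambda>n. T n l) sums (A l * (exp s - S l))" for l
    unfolding T_def by (rule sums_mult[OF shift])
  have phi_term: "pochhammer 1 n * pochhammer k l / pochhammer 1 (n + l) * s ^ n / fact n * (s*r) ^ l / fact l = T n l" for n l
    unfolding T_def A_def E_def pochhammer_fact[symmetric]
    by (simp add: power_add power_mult_distrib field_simps)
  have outer_sm: "summable (\<lambda>l. \<Sum>n. T n l)"
  proof (rule summable_comparison_test)
    show "summable (\<lambda>l. A l * exp s)" by (intro summable_mult2 Asm)
    show "\<exists>N. \<forall>l\<ge>N. norm (\<Sum>n. T n l) \<le> A l * exp s"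
      using A0 S0 Sle by (auto simp: sums_iff[THEN iffD1, OF Tl, THEN conjunct2] abs_mult intro!: mult_left_mono)
  qed
  have "humbert_Phi2 1 k 1 s (s*r) = (\<Sum>n. \<Sum>l. T n l)"
    unfolding humbert_Phi2_def phi_term ..
  also have "\<dots> = (\<Sum>l. \<Sum>n. T n l)"
    by (rule suminf_swap_nonneg[OF T0 sums_summable[OF Tl] outer_sm])
  finally have phi_eq: "humbert_Phi2 1 k 1 s (s*r) = (\<Sum>l. A l * (exp s - S l))"
    using Tl by (simp add: sums_iff)
  have SPhi: "(\<lambda>l. A l * (exp s - S l)) sums humbert_Phi2 1 k 1 s (s*r)"
    unfolding phi_eq using outer_sm Tl by (simp add: sums_iff summable_sums)
  have hyp_eq: "s^n / fact n * hyp1F1 k (real n + 1) (s*r) = (\<Sum>l. T n l)" for n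
  proof -
    define u where "u l = pochhammer k l / pochhammer (real n + 1) l * (s*r)^l / fact l" for l
    have pne: "pochhammer (real n + 1) l \<noteq> 0" for l
      using poch_shift[of n l] by auto
    have u_eq: "u l = A l * E l * (fact n * fact l / fact (n+l))" for l
    proof -
      have pe: "pochhammer (real n + 1) l = fact (n+l) / fact n"
        using poch_shift[of n l] by (simp add: field_simps)
      show ?thesis unfolding u_def A_def E_def pe by (simp add: power_mult_distrib field_simps)
    qed
    have usm: "summable u"
    proof (rule summable_comparison_test)
      show "summable (\<lambda>l. A l * exp s)" by (intro summable_mult2 Asm)
      have "norm (u l) \<le> A l * exp s" for l
      proof -
        have q0: "0 \<le> fact n * fact l / (fact (n+l) :: real)" by simp
        have q1: "fact n * fact l / fact (n+l) \<le> (1::real)" using fact_mult_le[of n l] by simp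
        have "norm (u l) = A l * E l * (fact n * fact l / fact (n+l))"
          unfolding u_eq using A0 E0 q0 by simp
        also have "\<dots> \<le> A l * exp s * 1"
          using A0 E0 q0 q1 E_def pow_fact_le_exp[OF s, of l]
          by (intro mult_mono mult_left_mono) auto
        finally show ?thesis by simp
      qed
      then show "\<exists>N. \<forall>l\<ge>N. norm (u l) \<le> A l * exp s" by blast
    qed
    have "s^n / fact n * hyp1F1 k (real n + 1) (s*r) = (\<Sum>l. s^n / fact n * u l)"
      unfolding hyp1F1_def u_def[symmetric] using suminf_mult[OF usm, of "s^n / fact n"] by simp
    also have "\<dots> = (\<Sum>l. T n l)"
    proof (rule arg_cong[where f=suminf], rule ext)
      fix l
      show "s^n / fact n * u l = T n l"
        unfolding u_eq T_def E_def by (simp add: power_add field_simps)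
    qed
    finally show ?thesis .
  qed
  have sumT: "(\<Sum>n<M. T n l) = A l * (S (l+M) - S l)" for l
  proof -
    have "(\<Sum>n<M. E (n+l)) = S (l+M) - S l"
      by (induction M) (simp_all add: S_def add.commute)
    then show ?thesis unfolding T_def by (simp add: sum_distrib_left[symmetric])
  qed
  have Tn_sm: "summable (T n)" for n
  proof (rule summable_comparison_test)
    show "summable (\<lambda>l. A l * exp s)" by (intro summable_mult2 Asm)
    have "norm (T n l) \<le> A l * exp s" for l
    proof -
      have "norm (T n l) = A l * E (n+l)" unfolding T_def using A0 E0 by simp
      also have "\<dots> \<le> A l * exp s"
        using A0 pow_fact_le_exp[OF s, of "n+l"] unfolding E_def by (intro mult_left_mono) auto
      finally show ?thesis .
    qed
    then show "\<exists>N. \<forall>l\<ge>N. norm (T n l) \<le> A l * exp s" by blast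
  qed
  have "(\<Sum>n<M. s^n / fact n * hyp1F1 k (real n + 1) (s*r)) = (\<Sum>n<M. \<Sum>l. T n l)"
    by (rule sum.cong[OF refl hyp_eq])
  also have "\<dots> = (\<Sum>l. \<Sum>n<M. T n l)"
    by (rule suminf_sum[symmetric]) (rule Tn_sm)
  finally have H_eq: "(\<Sum>n<M. s^n / fact n * hyp1F1 k (real n + 1) (s*r)) = (\<Sum>l. A l * (S (l+M) - S l))"
    by (simp add: sumT)
  have Hsm: "summable (\<lambda>l. A l * (S (l+M) - S l))"
    unfolding sumT[symmetric] by (intro summable_sum Tn_sm)
  have SH: "(\<lambda>l. A l * (S (l+M) - S l)) sums (\<Sum>n<M. s^n / fact n * hyp1F1 k (real n + 1) (s*r))"
    unfolding H_eq using Hsm by (rule summable_sums)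
  have comb: "(\<lambda>l. A l - exp (-s) * (A l * (exp s - S l)) + exp (-s) * (A l * (S (l+M) - S l))) sums
     ((1-r) powr (-k) - exp (-s) * humbert_Phi2 1 k 1 s (s*r)
      + exp (-s) * (\<Sum>n<M. s^n / fact n * hyp1F1 k (real n + 1) (s*r)))"
    by (intro sums_add sums_diff sums_mult SA SPhi SH)
  have "A l - exp (-s) * (A l * (exp s - S l)) + exp (-s) * (A l * (S (l+M) - S l)) = A l * GG (l+M) s" for l
    unfolding GG_def S_def E_def by (simp add: algebra_simps exp_minus)
  with comb show ?thesis unfolding A_def by simp
qed


theorem theorem3:
  fixes k p a b :: real and m :: nat
  assumes "k > 0" and "p > 0" and "m \<ge> 1"
  shows "marcumF k m a b p =
           Gamma k / p powr k
         - 2 powr k * Gamma k * exp (- (b\<^sup>2) / 2) / (a\<^sup>2 + 2 * p) powr k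
             * humbert_Phi2 1 k 1 (b\<^sup>2 / 2) (a\<^sup>2 * b\<^sup>2 / (2 * a\<^sup>2 + 4 * p))
         + 2 powr k * Gamma k * exp (- (b\<^sup>2) / 2) / (a\<^sup>2 + 2 * p) powr k
             * (\<Sum>n<m. b ^ (2 * n) / (fact n * 2 ^ n)
                 * hyp1F1 k (real n + 1) (a\<^sup>2 * b\<^sup>2 / (2 * a\<^sup>2 + 4 * p)))"
proof -
  note k = assms(1) and p = assms(2)
  obtain m' where m: "m = Suc m'" using assms(3) by (cases m) auto
  define c where "c = p + a\<^sup>2/2"
  define r where "r = (a\<^sup>2/2)/c"
  define s where "s = b\<^sup>2/2"
  have c: "c > 0" unfolding c_def using p by (simp add: add_pos_nonneg)
  have r0: "0 \<le> r" "r < 1" unfolding r_def c_def using p by (auto simp: add_pos_nonneg)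
  have s0: "s \<ge> 0" unfolding s_def by simp
  define R where "R = (1-r) powr (-k) - exp (-s) * humbert_Phi2 1 k 1 s (s*r)
      + exp (-s) * (\<Sum>n<m. s^n / fact n * hyp1F1 k (real n + 1) (s*r))"
  have "(\<lambda>l. pochhammer k l * r^l / fact l * GG (l+m) s) sums R"
    unfolding R_def by (rule final_series[OF k r0 s0])
  then have sR: "(\<Sum>l. pochhammer k l * r^l / fact l * GG (Suc (l+m')) s) = R"
    unfolding m by (simp add: sums_iff)
  have F: "marcumF k m a b p = Gamma k / c powr k * R"
    unfolding m marcumF_series[OF k p] c_def[symmetric] r_def[symmetric] s_def[symmetric] sR ..
  have hC: "2 powr k * Gamma k * exp (- (b\<^sup>2) / 2) / (a\<^sup>2 + 2 * p) powr k = Gamma k / c powr k * exp (-s)"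
  proof -
    have "(a\<^sup>2 + 2 * p) = 2 * c" unfolding c_def by simp
    then have "(a\<^sup>2 + 2 * p) powr k = 2 powr k * c powr k" using c by (simp add: powr_mult)
    then show ?thesis unfolding s_def using c by (simp add: field_simps)
  qed
  have hP: "Gamma k / c powr k * (1-r) powr (-k) = Gamma k / p powr k"
  proof -
    have "1 - r = (c - a\<^sup>2/2) / c" unfolding r_def using c by (simp add: field_simps)
    also have "c - a\<^sup>2/2 = p" unfolding c_def by simp
    finally have "1 - r = p / c" .
    then have "(1-r) powr (-k) = c powr k / p powr k"
      using p c by (simp add: powr_minus powr_divide)
    then show ?thesis using c by simp
  qed
  have hy: "a\<^sup>2 * b\<^sup>2 / (2 * a\<^sup>2 + 4 * p) = s * r"
    unfolding s_def r_def c_def using p by (simp add: field_simps add_pos_nonneg)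
  have hb: "b ^ (2 * n) / (fact n * 2 ^ n) = s^n / fact n" for n
    unfolding s_def by (simp add: power_mult power_divide)
  show ?thesis
    unfolding F hC hy hb m[symmetric] R_def hP[symmetric] s_def[symmetric]
    by (simp add: algebra_simps)
qed

end
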